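(* Let $\mathbb{F}$ be a finite field, $n$ a positive integer coprime with $|\mathbb{F}|$, and $\alpha\in\mathbb{F}$ with $\mathrm{ord}(\alpha)=n$. Let $A:=\mathbb{F}[x]/\langle x^n-1\rangle$. Let $\delta\in\mathbb{N}_0$ and $G:=\sum_{\nu=0}^{\delta}z^\nu\begin{pmatrix}1&\alpha^\nu&\alpha^{2\nu}&\ldots&\alpha^{(n-1)\nu}\end{pmatrix}\in\mathbb{F}[z]^{1\times n}$. Then the $\mathbb{F}$-algebra homomorphism $\sigma:A\to A$ defined by $\sigma(x)=\alpha x$ is an $\mathbb{F}$-automorphism of $A$, and the submodule $\mathcal{C}=\mathrm{im}\,G=\{uG\mid u\in\mathbb{F}[z]\}\subseteq\mathbb{F}[z]^n$ is $\sigma$-cyclic. In particular, if $\delta<n$, then $\mathcal{C}$ is a ($\sigma$-)cyclic MDS convolutional code with parameters $(n,1,\delta)$.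
   Context: $\mathrm{ord}(\alpha)$ is the multiplicative order of $\alpha$. For $\sigma\in\mathrm{Aut}_{\mathbb{F}}(A)$, the skew polynomial ring $A[z;\sigma]$ is the set of polynomials $\sum_\nu z^\nu a_\nu$ ($a_\nu\in A$) with usual addition and multiplication determined by associativity, distributivity, the multiplication of $A$, and the rule $az=z\sigma(a)$ for $a\in A$. Let $\mathfrak{p}:\mathbb{F}^n\to A$, $(v_0,\ldots,v_{n-1})\mapsto\sum_{i=0}^{n-1}v_ix^i$, extended coefficientwise to $\mathfrak{p}:\mathbb{F}[z]^n\to A[z;\sigma]$, $\sum_\nu z^\nu v_\nu\mapsto\sum_\nu z^\nu\mathfrak{p}(v_\nu)$. A submodule $\mathcal{C}\subseteq\mathbb{F}[z]^n$ is $\sigma$-cyclic if $\mathfrak{p}(\mathcal{C})$ is a left ideal of $A[z;\sigma]$. A convolutional code with parameters $(n,1,\delta)$ is $\mathrm{im}\,G$ for a right invertible $G\in\mathbb{F}[z]^{1\times n}$ whose entries have maximum degree $\delta$; it is MDS if its free distance $\min\{\mathrm{wt}(v)\mid 0\ne v\in\mathcal{C}\}$ equals $n(\delta+1)$, where $\mathrm{wt}(\sum_j v_jz^j)=\sum_j(\text{Hamming weight of }v_j)$. *)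

theory Defs
  imports "HOL-Computational_Algebra.Polynomial"
begin

definition mult_ord :: "'a::field \<Rightarrow> nat" where
  "mult_ord a = (if \<exists>k>0. a ^ k = 1 then (LEAST k. 0 < k \<and> a ^ k = 1) else 0)"

section \<open>The algebra A = F[x]/<x^n - 1>, represented by canonical residues of degree < n\<close>

definition xn1 :: "nat \<Rightarrow> 'a::field poly" where
  "xn1 n = monom 1 n - 1"

definition A_carr :: "nat \<Rightarrow> 'a::field poly set" where
  "A_carr n = {p. degree p < n}"

definition A_mult :: "nat \<Rightarrow> 'a::field poly \<Rightarrow> 'a poly \<Rightarrow> 'a poly" where
  "A_mult n p q = (p * q) mod xn1 n"

definition A_one :: "nat \<Rightarrow> 'a::field poly" where
  "A_one n = 1 mod xn1 n"

definition A_x :: "nat \<Rightarrow> 'a::field poly" where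
  "A_x n = [:0, 1:] mod xn1 n"

definition sigma :: "'a::field \<Rightarrow> nat \<Rightarrow> 'a poly \<Rightarrow> 'a poly" where
  "sigma \<alpha> n p = (pcompose p [:0, \<alpha>:]) mod xn1 n"

definition A_alg_automorphism :: "nat \<Rightarrow> ('a::field poly \<Rightarrow> 'a poly) \<Rightarrow> bool" where
  "A_alg_automorphism n s \<longleftrightarrow>
     bij_betw s (A_carr n) (A_carr n) \<and>
     (\<forall>p\<in>A_carr n. \<forall>q\<in>A_carr n. s (p + q) = s p + s q) \<and>
     (\<forall>p\<in>A_carr n. \<forall>q\<in>A_carr n. s (A_mult n p q) = A_mult n (s p) (s q)) \<and>
     (\<forall>c. \<forall>p\<in>A_carr n. s (smult c p) = smult c (s p)) \<and>
     s (A_one n) = A_one n"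

section \<open>Skew polynomial ring A[z;s], elements sum_nu z^nu a_nu as 'a poly poly\<close>

definition skew_carr :: "nat \<Rightarrow> 'a::field poly poly set" where
  "skew_carr n = {f. \<forall>i. coeff f i \<in> A_carr n}"

text \<open>(z^i a)(z^j b) = z^(i+j) s^j(a) b, using a z = z s(a)\<close>
definition skew_mult :: "nat \<Rightarrow> ('a::field poly \<Rightarrow> 'a poly) \<Rightarrow> 'a poly poly \<Rightarrow> 'a poly poly \<Rightarrow> 'a poly poly" where
  "skew_mult n s f g =
     (\<Sum>i\<le>degree f. \<Sum>j\<le>degree g. monom (A_mult n ((s ^^ j) (coeff f i)) (coeff g j)) (i + j))"

definition left_ideal :: "nat \<Rightarrow> ('a::field poly \<Rightarrow> 'a poly) \<Rightarrow> 'a poly poly set \<Rightarrow> bool" where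
  "left_ideal n s I \<longleftrightarrow>
     I \<subseteq> skew_carr n \<and> 0 \<in> I \<and>
     (\<forall>f\<in>I. \<forall>g\<in>I. f + g \<in> I) \<and> (\<forall>f\<in>I. - f \<in> I) \<and>
     (\<forall>r\<in>skew_carr n. \<forall>f\<in>I. skew_mult n s r f \<in> I)"

section \<open>F[z]^n as functions nat => 'a poly (components i < n, zero beyond) and the map p\<close>

definition pmap :: "nat \<Rightarrow> (nat \<Rightarrow> 'a::field poly) \<Rightarrow> 'a poly poly" where
  "pmap n c = (\<Sum>i<n. map_poly (\<lambda>a. monom a i) (c i))"

definition sigma_cyclic :: "nat \<Rightarrow> ('a::field poly \<Rightarrow> 'a poly) \<Rightarrow> (nat \<Rightarrow> 'a poly) set \<Rightarrow> bool" where
  "sigma_cyclic n s C \<longleftrightarrow> left_ideal n s (pmap n ` C)"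

definition image_row :: "(nat \<Rightarrow> 'a::field poly) \<Rightarrow> (nat \<Rightarrow> 'a poly) set" where
  "image_row g = {(\<lambda>i. u * g i) | u. True}"

definition right_invertible_row :: "nat \<Rightarrow> (nat \<Rightarrow> 'a::field poly) \<Rightarrow> bool" where
  "right_invertible_row n g \<longleftrightarrow> (\<exists>h. (\<Sum>i<n. g i * h i) = 1)"

definition conv_code_n1 :: "nat \<Rightarrow> nat \<Rightarrow> (nat \<Rightarrow> 'a::field poly) set \<Rightarrow> bool" where
  "conv_code_n1 n \<delta> C \<longleftrightarrow>
     (\<exists>g. (\<forall>i\<ge>n. g i = 0) \<and> right_invertible_row n g \<and>
          Max ((\<lambda>i. degree (g i)) ` {..<n}) = \<delta> \<and> C = image_row g)"

definition wt :: "nat \<Rightarrow> (nat \<Rightarrow> 'a::zero poly) \<Rightarrow> nat" where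
  "wt n v = (\<Sum>i<n. card {j. coeff (v i) j \<noteq> 0})"

definition free_distance :: "nat \<Rightarrow> (nat \<Rightarrow> 'a::zero poly) set \<Rightarrow> nat" where
  "free_distance n C = (LEAST w. \<exists>v\<in>C. v \<noteq> (\<lambda>_. 0) \<and> w = wt n v)"

definition is_MDS :: "nat \<Rightarrow> nat \<Rightarrow> (nat \<Rightarrow> 'a::zero poly) set \<Rightarrow> bool" where
  "is_MDS n \<delta> C \<longleftrightarrow> free_distance n C = n * (\<delta> + 1)"

definition Grow :: "'a::field \<Rightarrow> nat \<Rightarrow> nat \<Rightarrow> nat \<Rightarrow> 'a poly" where
  "Grow \<alpha> n \<delta> i = (if i < n then (\<Sum>\<nu>\<le>\<delta>. monom (\<alpha> ^ (i * \<nu>)) \<nu>) else 0)"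

end

theory Submission
  imports Defs "HOL-Computational_Algebra.Primes"
begin


lemma coeff_pcomp_lin: "coeff (pcompose (p::'a::comm_ring_1 poly) [:0, c:]) k = c ^ k * coeff p k"
proof (induction p arbitrary: k)
  case 0 show ?case by simp
next
  case (pCons a p)
  show ?case by (cases k) (simp_all add: pcompose_pCons pCons.IH mult.assoc)
qed

lemma degree_pcomp_lin: "degree (pcompose (p::'a::comm_ring_1 poly) [:0, c:]) \<le> degree p"
  by (rule degree_le) (auto simp: coeff_pcomp_lin coeff_eq_0)

lemma pcomp_lin_comp: "pcompose (pcompose (p::'a::comm_ring_1 poly) [:0, a:]) [:0, b:] = pcompose p [:0, a*b:]"
  unfolding poly_eq_iff coeff_pcomp_lin by (simp add: power_mult_distrib mult_ac)

lemma coeff_xn1: "coeff (xn1 n :: 'a::field poly) k = (if k = n then 1 else 0) - (if k = 0 then 1 else 0)"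
  by (simp add: xn1_def coeff_monom)

lemma degree_xn1: assumes "0 < n" shows "degree (xn1 n :: 'a::field poly) = n"
proof (rule antisym)
  show "degree (xn1 n :: 'a poly) \<le> n" by (rule degree_le) (simp add: coeff_xn1)
  show "n \<le> degree (xn1 n :: 'a poly)" by (rule le_degree) (use assms in \<open>simp add: coeff_xn1\<close>)
qed

lemma mod_xn1_id: assumes "degree p < n" "0 < n" shows "p mod xn1 n = (p :: 'a::field poly)"
  by (rule mod_poly_less) (simp add: degree_xn1 assms)

lemma pcomp_xn1: assumes "\<alpha> ^ n = 1" shows "pcompose (xn1 n) [:0, \<alpha>:] = (xn1 n :: 'a::field poly)"
  by (simp add: poly_eq_iff coeff_pcomp_lin coeff_xn1 assms)

lemma sigma_A: assumes "degree p < n" "0 < n" shows "sigma c n p = pcompose p [:0, c:]"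
  unfolding sigma_def using assms degree_pcomp_lin[of p c]
  by (intro mod_xn1_id) auto

lemma sigma_mod: assumes "\<alpha> ^ n = 1"
  shows "sigma \<alpha> n (a mod xn1 n) = sigma \<alpha> n (a :: 'a::field poly)"
proof -
  let ?m = "xn1 n :: 'a poly"
  have "pcompose a [:0,\<alpha>:] = pcompose (a div ?m) [:0,\<alpha>:] * ?m + pcompose (a mod ?m) [:0,\<alpha>:]"
    by (metis div_mult_mod_eq pcompose_add pcompose_mult pcomp_xn1[OF assms])
  then show ?thesis unfolding sigma_def by (metis mod_mult_self3 add.commute)
qed



lemma ord_facts:
  fixes \<alpha> :: "'a::field"
  assumes "0 < n" "mult_ord \<alpha> = n"
  shows "\<alpha> ^ n = 1" "\<alpha> \<noteq> 0" "\<And>k. 0 < k \<Longrightarrow> k < n \<Longrightarrow> \<alpha> ^ k \<noteq> 1"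
proof -
  have ex: "\<exists>k>0. \<alpha> ^ k = 1"
    using assms unfolding mult_ord_def by (metis less_irrefl)
  hence n: "n = (LEAST k. 0 < k \<and> \<alpha> ^ k = 1)" using assms unfolding mult_ord_def by simp
  show 1: "\<alpha> ^ n = 1" unfolding n using ex by (metis (mono_tags, lifting) LeastI)
  show "\<alpha> \<noteq> 0" using 1 assms(1) by (metis power_0_left zero_neq_one less_not_refl2)
  show "\<And>k. 0 < k \<Longrightarrow> k < n \<Longrightarrow> \<alpha> ^ k \<noteq> 1" unfolding n using not_less_Least by blast
qed

lemma ord_inj:
  fixes \<alpha> :: "'a::field"
  assumes "\<alpha> \<noteq> 0" "\<And>k. 0 < k \<Longrightarrow> k < n \<Longrightarrow> \<alpha> ^ k \<noteq> 1"
  shows "inj_on (\<lambda>i. \<alpha> ^ i) {..<n}"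
proof (rule inj_onI)
  fix i j assume ij: "i \<in> {..<n}" "j \<in> {..<n}" "\<alpha> ^ i = \<alpha> ^ j"
  show "i = j"
  proof (rule ccontr)
    assume "i \<noteq> j"
    then consider "i < j" | "j < i" by linarith
    then show False
    proof cases
      case 1
      have "\<alpha> ^ j = \<alpha> ^ i * \<alpha> ^ (j - i)" using 1 by (simp flip: power_add)
      hence "\<alpha> ^ (j - i) = 1" using ij(3) assms(1) by simp
      moreover have "j - i < n" using 1 ij(2) by auto
      ultimately show False using assms(2)[of "j - i"] 1 by auto
    next
      case 2
      have "\<alpha> ^ i = \<alpha> ^ j * \<alpha> ^ (i - j)" using 2 by (simp flip: power_add)
      hence "\<alpha> ^ (i - j) = 1" using ij(3) assms(1) by simp
      moreover have "i - j < n" using 2 ij(1) by auto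
      ultimately show False using assms(2)[of "i - j"] 2 by auto
    qed
  qed
qed

lemma of_nat_ord_nonzero:
  fixes \<alpha> :: "'a::{finite,field}"
  assumes "0 < n" "\<alpha> ^ n = 1" "\<And>k. 0 < k \<Longrightarrow> k < n \<Longrightarrow> \<alpha> ^ k \<noteq> 1"
  shows "(of_nat n :: 'a) \<noteq> 0"
proof
  assume "(of_nat n :: 'a) = 0"
  hence dv: "CHAR('a) dvd n" by (simp add: of_nat_eq_0_iff_char_dvd)
  have pos: "CHAR('a) > 0" by (rule finite_imp_CHAR_pos) simp
  have pr: "prime CHAR('a)" using pos prime_CHAR_semidom by blast
  obtain k where k: "n = CHAR('a) * k" using dv by blast
  have k0: "0 < k" using k assms(1) by (cases k) auto
  have "CHAR('a) \<ge> 2" using pr prime_ge_2_nat by blast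
  hence kn: "k < n" using k k0 by (metis mult_1 mult_less_mono1 one_less_numeral_iff semiring_norm(76) less_le_trans one_less_numeral_iff)
  have "(\<alpha> ^ k + (- 1)) ^ CHAR('a) = (\<alpha> ^ k) ^ CHAR('a) + (- 1) ^ CHAR('a)"
    by (rule freshmans_dream) (use pr in auto)
  also have "(\<alpha> ^ k) ^ CHAR('a) = 1" using assms(2) k by (simp add: power_mult[symmetric] mult.commute)
  also have "(- 1 :: 'a) ^ CHAR('a) = - (1 ^ CHAR('a))" by (rule minus_power_prime_CHAR) (use pr in auto)
  finally have "(\<alpha> ^ k + (- 1)) ^ CHAR('a) = 0" by simp
  hence "\<alpha> ^ k = 1" by simp
  thus False using assms(3) k0 kn by blast
qed

lemma A_one_eq: "0 < n \<Longrightarrow> A_one n = (1 :: 'a::field poly)"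
  unfolding A_one_def by (rule mod_xn1_id) auto

lemma sigma_automorphism:
  fixes \<alpha> :: "'a::field"
  assumes n: "0 < n" and an: "\<alpha> ^ n = 1" and a0: "\<alpha> \<noteq> 0"
  shows "A_alg_automorphism n (sigma \<alpha> n)"
proof -
  let ?m = "xn1 n :: 'a poly"
  have inA: "sigma c n p \<in> A_carr n" if "p \<in> A_carr n" for c :: 'a and p
    using that sigma_A[of p n c] degree_pcomp_lin[of p c] n by (auto simp: A_carr_def)
  have bij: "bij_betw (sigma \<alpha> n) (A_carr n) (A_carr n)"
  proof (rule bij_betw_byWitness[where f' = "sigma (inverse \<alpha>) n"])
    show "\<forall>a\<in>A_carr n. sigma (inverse \<alpha>) n (sigma \<alpha> n a) = a"
    proof
      fix a :: "'a poly" assume a: "a \<in> A_carr n"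
      have "sigma (inverse \<alpha>) n (sigma \<alpha> n a) = pcompose (pcompose a [:0,\<alpha>:]) [:0, inverse \<alpha>:]"
        using a inA[OF a] n by (simp add: A_carr_def sigma_A)
      also have "\<dots> = a" using a0 by (simp add: pcomp_lin_comp)
      finally show "sigma (inverse \<alpha>) n (sigma \<alpha> n a) = a" .
    qed
    show "\<forall>a\<in>A_carr n. sigma \<alpha> n (sigma (inverse \<alpha>) n a) = a"
    proof
      fix a :: "'a poly" assume a: "a \<in> A_carr n"
      have "sigma \<alpha> n (sigma (inverse \<alpha>) n a) = pcompose (pcompose a [:0,inverse \<alpha>:]) [:0, \<alpha>:]"
        using a inA[OF a] n by (simp add: A_carr_def sigma_A)
      also have "\<dots> = a" using a0 by (simp add: pcomp_lin_comp)
      finally show "sigma \<alpha> n (sigma (inverse \<alpha>) n a) = a" .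
    qed
  qed (use inA in auto)
  have add: "sigma \<alpha> n (p + q) = sigma \<alpha> n p + sigma \<alpha> n q" for p q
    by (simp add: sigma_def pcompose_add poly_mod_add_left)
  have mult: "sigma \<alpha> n (A_mult n p q) = A_mult n (sigma \<alpha> n p) (sigma \<alpha> n q)" for p q
  proof -
    have "sigma \<alpha> n (A_mult n p q) = sigma \<alpha> n (p * q)"
      unfolding A_mult_def by (rule sigma_mod[OF an])
    also have "\<dots> = (pcompose p [:0,\<alpha>:] * pcompose q [:0,\<alpha>:]) mod ?m"
      by (simp add: sigma_def pcompose_mult)
    also have "\<dots> = A_mult n (sigma \<alpha> n p) (sigma \<alpha> n q)"
      unfolding A_mult_def sigma_def by (simp add: mod_mult_eq)
    finally show ?thesis .
  qed
  have sm: "sigma \<alpha> n (smult c p) = smult c (sigma \<alpha> n p)" for c p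
    by (simp add: sigma_def pcompose_smult mod_smult_left)
  have one: "sigma \<alpha> n (A_one n) = A_one n"
    using n by (simp add: A_one_eq sigma_def pcompose_1 mod_xn1_id)
  show ?thesis unfolding A_alg_automorphism_def using bij add mult sm one by blast
qed

lemma sigma_x:
  fixes \<alpha> :: "'a::field"
  assumes an: "\<alpha> ^ n = 1"
  shows "sigma \<alpha> n (A_x n) = smult \<alpha> (A_x n)"
proof -
  have "sigma \<alpha> n (A_x n) = sigma \<alpha> n [:0,1:]" unfolding A_x_def by (rule sigma_mod[OF an])
  also have "\<dots> = [:0,\<alpha>:] mod xn1 n" by (simp add: sigma_def pcompose_pCons)
  also have "\<dots> = smult \<alpha> (A_x n)" by (simp add: A_x_def flip: mod_smult_left)
  finally show ?thesis .
qed



definition Vv :: "'a::field \<Rightarrow> nat \<Rightarrow> nat \<Rightarrow> 'a poly" where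
  "Vv \<alpha> n \<nu> = (\<Sum>l<n. monom (\<alpha> ^ (l * \<nu>)) l)"

definition Phi :: "'a::field \<Rightarrow> nat \<Rightarrow> nat \<Rightarrow> 'a poly \<Rightarrow> 'a poly poly" where
  "Phi \<alpha> n \<delta> u = pmap n (\<lambda>i. u * Grow \<alpha> n \<delta> i)"

lemma smult_sum_right: "smult c (\<Sum>x\<in>A. f x) = (\<Sum>x\<in>A. smult c (f x))"
  by (induction A rule: infinite_finite_induct) (simp_all add: smult_add_right)

lemma coeff_sum_monom_lt: "coeff (\<Sum>l<n. monom (c l) l) k = (if k < n then c k else 0)"
  by (simp add: coeff_sum coeff_monom)

lemma degree_sum_monom_lt:
  assumes "0 < n" shows "degree (\<Sum>l<n. monom (c l) l) < n"
proof -
  have "degree (\<Sum>l<n. monom (c l) l) \<le> n - 1"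
    by (rule degree_le) (auto simp: coeff_sum_monom_lt)
  thus ?thesis using assms by linarith
qed

lemma coeff_Vv: "coeff (Vv \<alpha> n \<nu>) k = (if k < n then \<alpha> ^ (k * \<nu>) else 0)"
  unfolding Vv_def by (rule coeff_sum_monom_lt)

lemma degree_Vv: "0 < n \<Longrightarrow> degree (Vv \<alpha> n \<nu>) < n"
  unfolding Vv_def by (rule degree_sum_monom_lt)

lemma coeff_Phi: "coeff (Phi \<alpha> n \<delta> u) k = (\<Sum>i<n. monom (coeff (u * Grow \<alpha> n \<delta> i) k) i)"
  unfolding Phi_def pmap_def by (simp add: coeff_sum coeff_map_poly)

lemma Phi_add: "Phi \<alpha> n \<delta> (u + v) = Phi \<alpha> n \<delta> u + Phi \<alpha> n \<delta> v"
  by (simp add: poly_eq_iff coeff_Phi distrib_right add_monom[symmetric] sum.distrib)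

lemma Phi_0: "Phi \<alpha> n \<delta> 0 = 0"
  by (simp add: poly_eq_iff coeff_Phi)

lemma Phi_uminus: "Phi \<alpha> n \<delta> (- u) = - Phi \<alpha> n \<delta> u"
  using Phi_add[of \<alpha> n \<delta> "-u" u] Phi_0[of \<alpha> n \<delta>] by (simp add: eq_neg_iff_add_eq_0)

lemma Phi_sum: "Phi \<alpha> n \<delta> (\<Sum>x\<in>A. f x) = (\<Sum>x\<in>A. Phi \<alpha> n \<delta> (f x))"
  by (induction A rule: infinite_finite_induct) (simp_all add: Phi_0 Phi_add)

lemma Grow_sum: "i < n \<Longrightarrow> Grow \<alpha> n \<delta> i = (\<Sum>\<nu>\<le>\<delta>. monom (\<alpha> ^ (i * \<nu>)) \<nu>)"
  by (simp add: Grow_def)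

lemma Phi_monom:
  "Phi \<alpha> n \<delta> (monom c k) = (\<Sum>\<nu>\<le>\<delta>. monom (smult c (Vv \<alpha> n \<nu>)) (k + \<nu>))"
proof -
  have "coeff (Phi \<alpha> n \<delta> (monom c k)) m = coeff (\<Sum>\<nu>\<le>\<delta>. monom (smult c (Vv \<alpha> n \<nu>)) (k + \<nu>)) m" for m
  proof -
    have "coeff (Phi \<alpha> n \<delta> (monom c k)) m
        = (\<Sum>i<n. monom (\<Sum>\<nu>\<le>\<delta>. if k + \<nu> = m then c * \<alpha> ^ (i * \<nu>) else 0) i)"
      unfolding coeff_Phi
      by (intro sum.cong refl) (simp add: Grow_sum sum_distrib_left mult_monom coeff_sum coeff_monom)
    also have "\<dots> = (\<Sum>\<nu>\<le>\<delta>. \<Sum>i<n. monom (if k + \<nu> = m then c * \<alpha> ^ (i * \<nu>) else 0) i)"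
      by (simp add: monom_sum sum.swap[of _ "{..<n}"])
    also have "\<dots> = coeff (\<Sum>\<nu>\<le>\<delta>. monom (smult c (Vv \<alpha> n \<nu>)) (k + \<nu>)) m"
      by (simp add: coeff_sum coeff_monom Vv_def) (intro sum.cong refl, auto simp: smult_sum_right smult_monom)
    finally show ?thesis .
  qed
  thus ?thesis by (simp add: poly_eq_iff)
qed

lemma Phi_expand:
  "Phi \<alpha> n \<delta> u = (\<Sum>k\<le>degree u. \<Sum>\<nu>\<le>\<delta>. monom (smult (coeff u k) (Vv \<alpha> n \<nu>)) (k + \<nu>))"
proof -
  have "Phi \<alpha> n \<delta> u = Phi \<alpha> n \<delta> (\<Sum>k\<le>degree u. monom (coeff u k) k)"
    by (simp add: poly_as_sum_of_monoms)
  also have "\<dots> = (\<Sum>k\<le>degree u. \<Sum>\<nu>\<le>\<delta>. monom (smult (coeff u k) (Vv \<alpha> n \<nu>)) (k + \<nu>))"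
    by (simp add: Phi_sum Phi_monom)
  finally show ?thesis .
qed

lemma degree_Phi: "degree (Phi \<alpha> n \<delta> u) \<le> degree u + \<delta>"
proof (rule degree_le, intro allI impI)
  fix m assume m: "degree u + \<delta> < m"
  show "coeff (Phi \<alpha> n \<delta> u) m = 0"
    unfolding Phi_expand coeff_sum
    by (intro sum.neutral ballI) (use m in \<open>auto simp: coeff_monom\<close>)
qed

lemma coeff_Phi_A: "0 < n \<Longrightarrow> degree (coeff (Phi \<alpha> n \<delta> u) k) < n"
  unfolding coeff_Phi by (rule degree_sum_monom_lt)



lemma sigma_pow:
  assumes "degree a < n" "0 < n"
  shows "(sigma c n ^^ j) a = pcompose a [:0, c ^ j:]"
proof (induction j)
  case 0 show ?case by simp
next
  case (Suc j)
  have d: "degree (pcompose a [:0, c ^ j:]) < n" using degree_pcomp_lin[of a "c^j"] assms by linarith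
  have "(sigma c n ^^ Suc j) a = sigma c n (pcompose a [:0, c ^ j:])" using Suc by simp
  also have "\<dots> = pcompose a [:0, c ^ Suc j:]"
    using sigma_A[OF d assms(2)] by (simp add: pcomp_lin_comp mult.commute)
  finally show ?case .
qed

lemma xV:
  fixes \<alpha> :: "'a::field"
  assumes n: "0 < n" and an: "\<alpha> ^ n = 1" and a0: "\<alpha> \<noteq> 0"
  shows "[:0,1:] * Vv \<alpha> n \<nu> = smult (inverse (\<alpha> ^ \<nu>)) (Vv \<alpha> n \<nu>) + smult (inverse (\<alpha> ^ \<nu>)) (xn1 n)"
proof -
  have step: "\<alpha> ^ (Suc k * \<nu>) = \<alpha> ^ (k * \<nu>) * \<alpha> ^ \<nu>" for k
    by (simp add: power_add)
  have nn: "\<alpha> ^ (n * \<nu>) = 1" using an by (simp add: power_mult)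
  show ?thesis
  proof (rule poly_eqI)
    fix k
    show "coeff ([:0,1:] * Vv \<alpha> n \<nu>) k = coeff (smult (inverse (\<alpha> ^ \<nu>)) (Vv \<alpha> n \<nu>) + smult (inverse (\<alpha> ^ \<nu>)) (xn1 n)) k"
    proof (cases k)
      case 0 thus ?thesis using n by (simp add: coeff_Vv coeff_xn1)
    next
      case (Suc j)
      have a\<nu>: "\<alpha> ^ \<nu> \<noteq> 0" using a0 by simp
      show ?thesis
      proof (cases "Suc j < n")
        case True
        thus ?thesis using Suc a\<nu> by (simp add: coeff_Vv coeff_xn1 step field_simps power_add)
      next
        case False
        show ?thesis
        proof (cases "Suc j = n")
          case True
          have "\<alpha> ^ (j * \<nu>) = inverse (\<alpha> ^ \<nu>)"
            using nn step[of j] True a\<nu> by (simp add: field_simps)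
          thus ?thesis using Suc True[symmetric] by (simp add: coeff_Vv coeff_xn1)
        next
          case False
          thus ?thesis using Suc \<open>\<not> Suc j < n\<close> by (simp add: coeff_Vv coeff_xn1)
        qed
      qed
    qed
  qed
qed

lemma xV_mod:
  fixes \<alpha> :: "'a::field"
  assumes n: "0 < n" and an: "\<alpha> ^ n = 1" and a0: "\<alpha> \<noteq> 0"
  shows "([:0,1:] * Vv \<alpha> n \<nu>) mod xn1 n = smult (inverse (\<alpha> ^ \<nu>)) (Vv \<alpha> n \<nu>)"
  unfolding xV[OF assms] poly_mod_add_left mod_smult_left
  using mod_xn1_id[OF degree_Vv[OF n, of \<alpha> \<nu>] n] by simp

lemma PV:
  fixes \<alpha> :: "'a::field"
  assumes n: "0 < n" and an: "\<alpha> ^ n = 1" and a0: "\<alpha> \<noteq> 0"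
  shows "(p * Vv \<alpha> n \<nu>) mod xn1 n = smult (poly p (inverse (\<alpha> ^ \<nu>))) (Vv \<alpha> n \<nu>)"
proof (induction p)
  case 0 show ?case by simp
next
  case (pCons c p)
  let ?V = "Vv \<alpha> n \<nu>" and ?m = "xn1 n :: 'a poly" and ?b = "inverse (\<alpha> ^ \<nu>)"
  have V: "?V mod ?m = ?V" using mod_xn1_id[OF degree_Vv[OF n] n] .
  have e: "pCons c p * ?V = smult c ?V + [:0,1:] * (p * ?V)" by simp
  have "(pCons c p * ?V) mod ?m = smult c ?V + ([:0,1:] * (p * ?V)) mod ?m"
    unfolding e poly_mod_add_left mod_smult_left V ..
  also have "\<dots> = smult c ?V + ([:0,1:] * ((p * ?V) mod ?m)) mod ?m"
    by (simp only: mod_mult_right_eq)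
  also have "\<dots> = smult c ?V + smult (poly p ?b) (([:0,1:] * ?V) mod ?m)"
    by (simp only: pCons.IH mult_smult_right mod_smult_left)
  also have "\<dots> = smult (poly (pCons c p) ?b) ?V"
  proof -
    have X: "([:0,1:] * ?V) mod ?m = smult ?b ?V" by (rule xV_mod[OF assms])
    show ?thesis unfolding X by (simp add: smult_add_left mult.commute)
  qed
  finally show ?case .
qed

lemma KM:
  fixes \<alpha> :: "'a::field"
  assumes n: "0 < n" and an: "\<alpha> ^ n = 1" and a0: "\<alpha> \<noteq> 0"
    and a: "degree a < n" and j: "\<nu> \<le> j"
  shows "A_mult n ((sigma \<alpha> n ^^ j) a) (Vv \<alpha> n \<nu>) = smult (poly a (\<alpha> ^ (j - \<nu>))) (Vv \<alpha> n \<nu>)"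
proof -
  have "inverse (\<alpha> ^ \<nu>) * \<alpha> ^ j = \<alpha> ^ (j - \<nu>)"
    using a0 j by (simp add: power_diff field_simps)
  thus ?thesis
    unfolding A_mult_def sigma_pow[OF a n] PV[OF n an a0] by (simp add: poly_pcompose)
qed



definition SMd :: "nat \<Rightarrow> ('a::field poly \<Rightarrow> 'a poly) \<Rightarrow> 'a poly poly \<Rightarrow> nat \<Rightarrow> 'a poly poly \<Rightarrow> 'a poly poly" where
  "SMd n s r M f = (\<Sum>i\<le>degree r. \<Sum>j\<le>M. monom (A_mult n ((s ^^ j) (coeff r i)) (coeff f j)) (i + j))"

lemma skew_SMd:
  assumes "degree f \<le> M"
  shows "skew_mult n s r f = SMd n s r M f"
  unfolding skew_mult_def SMd_def
proof (rule sum.cong[OF refl])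
  fix i
  show "(\<Sum>j\<le>degree f. monom (A_mult n ((s ^^ j) (coeff r i)) (coeff f j)) (i + j)) =
        (\<Sum>j\<le>M. monom (A_mult n ((s ^^ j) (coeff r i)) (coeff f j)) (i + j))"
    by (rule sum.mono_neutral_left) (use assms in \<open>auto simp: coeff_eq_0 A_mult_def\<close>)
qed

lemma SMd_add: "SMd n s r M (f + g) = SMd n s r M f + SMd n s r M g"
  unfolding SMd_def A_mult_def
  by (simp add: distrib_left poly_mod_add_left add_monom[symmetric] sum.distrib)

lemma SMd_0: "SMd n s r M 0 = 0"
  unfolding SMd_def A_mult_def by simp

lemma SMd_sum: "SMd n s r M (\<Sum>x\<in>A. f x) = (\<Sum>x\<in>A. SMd n s r M (f x))"
  by (induction A rule: infinite_finite_induct) (simp_all add: SMd_0 SMd_add)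

lemma SMd_monom:
  assumes "t \<le> M"
  shows "SMd n s r M (monom X t) = (\<Sum>i\<le>degree r. monom (A_mult n ((s ^^ t) (coeff r i)) X) (i + t))"
  unfolding SMd_def
proof (intro sum.cong refl)
  fix i
  have "\<And>j. monom (A_mult n ((s ^^ j) (coeff r i)) (coeff (monom X t) j)) (i + j)
        = (if j = t then monom (A_mult n ((s ^^ t) (coeff r i)) X) (i + t) else 0)"
    by (auto simp: coeff_monom A_mult_def)
  hence "(\<Sum>j\<le>M. monom (A_mult n ((s ^^ j) (coeff r i)) (coeff (monom X t) j)) (i + j))
        = (\<Sum>j\<le>M. if j = t then monom (A_mult n ((s ^^ t) (coeff r i)) X) (i + t) else 0)"
    by simp
  also have "\<dots> = monom (A_mult n ((s ^^ t) (coeff r i)) X) (i + t)"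
    using assms by (simp add: sum.delta)
  finally show "(\<Sum>j\<le>M. monom (A_mult n ((s ^^ j) (coeff r i)) (coeff (monom X t) j)) (i + j))
        = monom (A_mult n ((s ^^ t) (coeff r i)) X) (i + t)" .
qed

lemma A_mult_smult: "A_mult n a (smult c b) = smult c (A_mult n a b)"
  unfolding A_mult_def by (simp add: mod_smult_left)

lemma left_mult:
  fixes \<alpha> :: "'a::field"
  assumes n: "0 < n" and an: "\<alpha> ^ n = 1" and a0: "\<alpha> \<noteq> 0" and r: "r \<in> skew_carr n"
  shows "skew_mult n (sigma \<alpha> n) r (Phi \<alpha> n \<delta> u) =
         Phi \<alpha> n \<delta> (\<Sum>i\<le>degree r. \<Sum>k\<le>degree u. monom (coeff u k * poly (coeff r i) (\<alpha> ^ k)) (i + k))"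
proof -
  let ?M = "degree u + \<delta>"
  let ?V = "Vv \<alpha> n"
  have rA: "degree (coeff r i) < n" for i using r by (simp add: skew_carr_def A_carr_def)
  have "skew_mult n (sigma \<alpha> n) r (Phi \<alpha> n \<delta> u) = SMd n (sigma \<alpha> n) r ?M (Phi \<alpha> n \<delta> u)"
    by (rule skew_SMd) (rule degree_Phi)
  also have "\<dots> = (\<Sum>k\<le>degree u. \<Sum>\<nu>\<le>\<delta>. SMd n (sigma \<alpha> n) r ?M (monom (smult (coeff u k) (?V \<nu>)) (k + \<nu>)))"
    by (simp add: Phi_expand[of \<alpha> n \<delta> u] SMd_sum)
  also have "\<dots> = (\<Sum>k\<le>degree u. \<Sum>\<nu>\<le>\<delta>. \<Sum>i\<le>degree r. monom (smult (coeff u k * poly (coeff r i) (\<alpha> ^ k)) (?V \<nu>)) (i + k + \<nu>))"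
  proof (intro sum.cong refl)
    fix k \<nu> assume k: "k \<in> {..degree u}" and \<nu>: "\<nu> \<in> {..\<delta>}"
    have "SMd n (sigma \<alpha> n) r ?M (monom (smult (coeff u k) (?V \<nu>)) (k + \<nu>))
      = (\<Sum>i\<le>degree r. monom (A_mult n ((sigma \<alpha> n ^^ (k + \<nu>)) (coeff r i)) (smult (coeff u k) (?V \<nu>))) (i + (k + \<nu>)))"
      by (rule SMd_monom) (use k \<nu> in auto)
    also have "\<dots> = (\<Sum>i\<le>degree r. monom (smult (coeff u k * poly (coeff r i) (\<alpha> ^ k)) (?V \<nu>)) (i + k + \<nu>))"
      by (intro sum.cong refl) (simp add: A_mult_smult KM[OF n an a0 rA] add.assoc)
    finally show "SMd n (sigma \<alpha> n) r ?M (monom (smult (coeff u k) (?V \<nu>)) (k + \<nu>))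
      = (\<Sum>i\<le>degree r. monom (smult (coeff u k * poly (coeff r i) (\<alpha> ^ k)) (?V \<nu>)) (i + k + \<nu>))" .
  qed
  also have "\<dots> = (\<Sum>k\<le>degree u. \<Sum>i\<le>degree r. \<Sum>\<nu>\<le>\<delta>. monom (smult (coeff u k * poly (coeff r i) (\<alpha> ^ k)) (?V \<nu>)) (i + k + \<nu>))"
    by (rule sum.cong[OF refl], rule sum.swap)
  also have "\<dots> = (\<Sum>i\<le>degree r. \<Sum>k\<le>degree u. \<Sum>\<nu>\<le>\<delta>. monom (smult (coeff u k * poly (coeff r i) (\<alpha> ^ k)) (?V \<nu>)) (i + k + \<nu>))"
    by (rule sum.swap)
  also have "\<dots> = Phi \<alpha> n \<delta> (\<Sum>i\<le>degree r. \<Sum>k\<le>degree u. monom (coeff u k * poly (coeff r i) (\<alpha> ^ k)) (i + k))"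
    by (simp add: Phi_sum Phi_monom)
  finally show ?thesis .
qed

lemma sigma_cyclic_part:
  fixes \<alpha> :: "'a::field"
  assumes n: "0 < n" and an: "\<alpha> ^ n = 1" and a0: "\<alpha> \<noteq> 0"
  shows "sigma_cyclic n (sigma \<alpha> n) (image_row (Grow \<alpha> n \<delta>))"
proof -
  have img: "pmap n ` image_row (Grow \<alpha> n \<delta>) = range (Phi \<alpha> n \<delta>)"
    by (auto simp: image_row_def Phi_def)
  show ?thesis
    unfolding sigma_cyclic_def left_ideal_def img
  proof (intro conjI ballI)
    show "range (Phi \<alpha> n \<delta>) \<subseteq> skew_carr n"
      using coeff_Phi_A[OF n] by (auto simp: skew_carr_def A_carr_def)
    show "0 \<in> range (Phi \<alpha> n \<delta>)" by (metis Phi_0 rangeI)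
    fix f assume "f \<in> range (Phi \<alpha> n \<delta>)"
    then obtain u where f: "f = Phi \<alpha> n \<delta> u" by blast
    show "- f \<in> range (Phi \<alpha> n \<delta>)" unfolding f by (metis Phi_uminus rangeI)
    {
      fix g assume "g \<in> range (Phi \<alpha> n \<delta>)"
      then obtain v where g: "g = Phi \<alpha> n \<delta> v" by blast
      show "f + g \<in> range (Phi \<alpha> n \<delta>)" unfolding f g by (metis Phi_add rangeI)
    }
    {
      fix r :: "'a poly poly" assume "r \<in> skew_carr n"
      show "skew_mult n (sigma \<alpha> n) r f \<in> range (Phi \<alpha> n \<delta>)"
        unfolding f left_mult[OF n an a0 \<open>r \<in> skew_carr n\<close>] by (rule rangeI)
    }
  qed
qed



lemma coeff_Grow: "i < n \<Longrightarrow> coeff (Grow \<alpha> n \<delta> i) k = (if k \<le> \<delta> then \<alpha> ^ (i * k) else 0)"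
  by (simp add: Grow_sum coeff_sum coeff_monom)

lemma degree_Grow_le: "degree (Grow \<alpha> n \<delta> i) \<le> \<delta>"
proof (cases "i < n")
  case True thus ?thesis by (intro degree_le) (simp add: coeff_Grow)
qed (simp add: Grow_def)

lemma degree_Grow:
  assumes "i < n" "\<alpha> \<noteq> 0" shows "degree (Grow \<alpha> n \<delta> i) = \<delta>"
proof (rule antisym)
  show "degree (Grow \<alpha> n \<delta> i) \<le> \<delta>" by (rule degree_Grow_le)
  show "\<delta> \<le> degree (Grow \<alpha> n \<delta> i)" by (rule le_degree) (use assms in \<open>simp add: coeff_Grow\<close>)
qed

lemma right_inv:
  fixes \<alpha> :: "'a::field"
  assumes n: "0 < n" and an: "\<alpha> ^ n = 1" and ord: "\<And>k. 0 < k \<Longrightarrow> k < n \<Longrightarrow> \<alpha> ^ k \<noteq> 1"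
    and nz: "(of_nat n :: 'a) \<noteq> 0" and dn: "\<delta> < n"
  shows "right_invertible_row n (Grow \<alpha> n \<delta>)"
  unfolding right_invertible_row_def
proof (intro exI[of _ "\<lambda>i. [: inverse (of_nat n) :]"] poly_eqI)
  fix k
  have gs: "(\<Sum>i<n. \<alpha> ^ (i * k)) = (if k = 0 then of_nat n else 0)" if "k \<le> \<delta>"
  proof (cases "k = 0")
    case False
    have ne: "\<alpha> ^ k \<noteq> 1" using ord[of k] False that dn by simp
    have "(\<Sum>i<n. \<alpha> ^ (i * k)) = (\<Sum>i<n. (\<alpha> ^ k) ^ i)" by (intro sum.cong refl) (metis power_mult mult.commute)
    also have "\<dots> = ((\<alpha> ^ k) ^ n - 1) / (\<alpha> ^ k - 1)" by (rule geometric_sum[OF ne])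
    also have "(\<alpha> ^ k) ^ n = 1" using an by (metis power_mult mult.commute power_one)
    finally show ?thesis using False by simp
  qed simp
  show "coeff (\<Sum>i<n. Grow \<alpha> n \<delta> i * [:inverse (of_nat n):]) k = coeff 1 k"
  proof -
    have "coeff (\<Sum>i<n. Grow \<alpha> n \<delta> i * [:inverse (of_nat n):]) k
        = inverse (of_nat n) * (if k \<le> \<delta> then (\<Sum>i<n. \<alpha> ^ (i * k)) else 0)"
      by (auto simp: coeff_sum coeff_Grow sum_distrib_left[symmetric] mult.commute)
    thus ?thesis using nz gs by (auto simp: coeff_1)
  qed
qed

lemma conv_code_part:
  fixes \<alpha> :: "'a::field"
  assumes n: "0 < n" and an: "\<alpha> ^ n = 1" and a0: "\<alpha> \<noteq> 0" and ord: "\<And>k. 0 < k \<Longrightarrow> k < n \<Longrightarrow> \<alpha> ^ k \<noteq> 1"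
    and nz: "(of_nat n :: 'a) \<noteq> 0" and dn: "\<delta> < n"
  shows "conv_code_n1 n \<delta> (image_row (Grow \<alpha> n \<delta>))"
  unfolding conv_code_n1_def
proof (intro exI[of _ "Grow \<alpha> n \<delta>"] conjI allI impI refl)
  show "Grow \<alpha> n \<delta> i = 0" if "n \<le> i" for i using that by (simp add: Grow_def)
  show "right_invertible_row n (Grow \<alpha> n \<delta>)" by (rule right_inv[OF n an ord nz dn])
  have "(\<lambda>i. degree (Grow \<alpha> n \<delta> i)) ` {..<n} = {\<delta>}"
    using n degree_Grow[OF _ a0] by auto
  thus "Max ((\<lambda>i. degree (Grow \<alpha> n \<delta> i)) ` {..<n}) = \<delta>" by simp
qed



definition Wp :: "'a::field poly \<Rightarrow> nat \<Rightarrow> nat \<Rightarrow> 'a poly" where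
  "Wp u \<delta> j = (\<Sum>\<nu>\<le>\<delta>. monom (if \<nu> \<le> j then coeff u (j - \<nu>) else 0) \<nu>)"

lemma coeff_Wp: "coeff (Wp u \<delta> j) \<nu> = (if \<nu> \<le> \<delta> \<and> \<nu> \<le> j then coeff u (j - \<nu>) else 0)"
  by (simp add: Wp_def coeff_sum coeff_monom)

lemma coeff_uG:
  assumes "i < n"
  shows "coeff (u * Grow \<alpha> n \<delta> i) j = poly (Wp u \<delta> j) (\<alpha> ^ i)"
proof -
  have "coeff (u * Grow \<alpha> n \<delta> i) j = (\<Sum>\<nu>\<le>\<delta>. coeff (monom (\<alpha> ^ (i * \<nu>)) \<nu> * u) j)"
    using assms by (simp add: Grow_sum sum_distrib_left coeff_sum mult.commute)
  also have "\<dots> = poly (Wp u \<delta> j) (\<alpha> ^ i)"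
    unfolding Wp_def poly_sum
    by (intro sum.cong refl) (simp only: coeff_monom_mult, auto simp: poly_monom power_mult)
  finally show ?thesis .
qed

lemma roots_bound:
  fixes \<alpha> :: "'a::field"
  assumes a0: "\<alpha> \<noteq> 0" and inj: "inj_on (\<lambda>i. \<alpha> ^ i) {..<n}"
    and p: "p \<noteq> 0" and low: "\<And>\<nu>. \<nu> < a \<Longrightarrow> coeff p \<nu> = 0"
  shows "card {i\<in>{..<n}. poly p (\<alpha> ^ i) = 0} \<le> degree p - a"
proof -
  define q where "q = poly_shift a p"
  have pq: "p = monom 1 a * q"
    by (rule poly_eqI) (auto simp: coeff_monom_mult q_def coeff_poly_shift low)
  have q0: "q \<noteq> 0" using p pq by auto
  have dq: "degree q \<le> degree p - a"
    by (rule degree_le) (auto simp: q_def coeff_poly_shift coeff_eq_0)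
  have "{i\<in>{..<n}. poly p (\<alpha> ^ i) = 0} = {i\<in>{..<n}. poly q (\<alpha> ^ i) = 0}"
    using a0 by (subst pq) (auto simp: poly_monom)
  also have "card \<dots> \<le> card {x. poly q x = 0}"
    by (rule card_inj_on_le[where f = "\<lambda>i. \<alpha> ^ i"])
       (use inj poly_roots_finite[OF q0] in \<open>auto intro: inj_on_subset\<close>)
  also have "\<dots> \<le> degree q" by (rule card_poly_roots_bound[OF q0])
  finally show ?thesis using dq by linarith
qed

lemma nonroots_bound:
  fixes \<alpha> :: "'a::field"
  assumes a0: "\<alpha> \<noteq> 0" and inj: "inj_on (\<lambda>i. \<alpha> ^ i) {..<n}"
    and p: "p \<noteq> 0" and low: "\<And>\<nu>. \<nu> < a \<Longrightarrow> coeff p \<nu> = 0" and hi: "degree p \<le> b"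
  shows "n - (b - a) \<le> card {i\<in>{..<n}. poly p (\<alpha> ^ i) \<noteq> 0}"
proof -
  have "card {i\<in>{..<n}. poly p (\<alpha> ^ i) \<noteq> 0} + card {i\<in>{..<n}. poly p (\<alpha> ^ i) = 0} = card {..<n}"
  proof -
    have "{i\<in>{..<n}. poly p (\<alpha> ^ i) \<noteq> 0} \<union> {i\<in>{..<n}. poly p (\<alpha> ^ i) = 0} = {..<n}" by auto
    thus ?thesis by (subst card_Un_disjoint[symmetric]) auto
  qed
  moreover have "card {i\<in>{..<n}. poly p (\<alpha> ^ i) = 0} \<le> degree p - a"
    by (rule roots_bound[OF a0 inj p]) (rule low)
  ultimately show ?thesis using hi by simp
qed

definition Bc :: "'a::field \<Rightarrow> nat \<Rightarrow> nat \<Rightarrow> 'a poly \<Rightarrow> nat \<Rightarrow> nat" where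
  "Bc \<alpha> n \<delta> u j = card {i\<in>{..<n}. coeff (u * Grow \<alpha> n \<delta> i) j \<noteq> 0}"

lemma wt_eq:
  "wt n (\<lambda>i. u * Grow \<alpha> n \<delta> i) = (\<Sum>j\<le>degree u + \<delta>. Bc \<alpha> n \<delta> u j)"
proof -
  let ?c = "\<lambda>i j. coeff (u * Grow \<alpha> n \<delta> i) j"
  have "card {j. ?c i j \<noteq> 0} = (\<Sum>j\<le>degree u + \<delta>. if ?c i j \<noteq> 0 then 1 else 0)" for i
  proof -
    have dg: "degree (u * Grow \<alpha> n \<delta> i) \<le> degree u + \<delta>"
      using degree_mult_le[of u "Grow \<alpha> n \<delta> i"] degree_Grow_le[of \<alpha> n \<delta> i] by linarith
    have "{j. ?c i j \<noteq> 0} = {j\<in>{..degree u + \<delta>}. ?c i j \<noteq> 0}"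
      using dg by (auto intro: ccontr simp: coeff_eq_0)
    thus ?thesis by (simp add: sum.inter_filter[symmetric])
  qed
  hence "wt n (\<lambda>i. u * Grow \<alpha> n \<delta> i) = (\<Sum>i<n. \<Sum>j\<le>degree u + \<delta>. if ?c i j \<noteq> 0 then 1 else 0)"
    by (simp add: wt_def)
  also have "\<dots> = (\<Sum>j\<le>degree u + \<delta>. \<Sum>i<n. if ?c i j \<noteq> 0 then 1 else 0)"
    by (rule sum.swap)
  also have "\<dots> = (\<Sum>j\<le>degree u + \<delta>. Bc \<alpha> n \<delta> u j)"
    by (simp add: Bc_def sum.inter_filter[symmetric])
  finally show ?thesis .
qed



lemma Bbound:
  fixes \<alpha> :: "'a::field"
  assumes a0: "\<alpha> \<noteq> 0" and inj: "inj_on (\<lambda>i. \<alpha> ^ i) {..<n}"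
    and zl: "\<And>k. k < m \<Longrightarrow> coeff u k = 0"
    and v0: "\<nu>0 \<le> \<delta>" "\<nu>0 \<le> j" "coeff u (j - \<nu>0) \<noteq> 0"
  shows "n - (min \<delta> (j - m) - (j - degree u)) \<le> Bc \<alpha> n \<delta> u j"
proof -
  let ?p = "Wp u \<delta> j"
  have eq: "Bc \<alpha> n \<delta> u j = card {i\<in>{..<n}. poly ?p (\<alpha> ^ i) \<noteq> 0}"
    unfolding Bc_def by (intro arg_cong[where f = card]) (auto simp: coeff_uG)
  have p0: "?p \<noteq> 0"
  proof
    assume "?p = 0"
    hence "coeff ?p \<nu>0 = 0" by simp
    thus False using v0 by (simp add: coeff_Wp)
  qed
  have low: "coeff ?p \<nu> = 0" if "\<nu> < j - degree u" for \<nu>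
  proof -
    have "\<nu> \<le> j \<Longrightarrow> degree u < j - \<nu>" using that by linarith
    thus ?thesis by (simp add: coeff_Wp coeff_eq_0)
  qed
  have hi: "degree ?p \<le> min \<delta> (j - m)"
  proof (rule degree_le, intro allI impI)
    fix i assume i: "min \<delta> (j - m) < i"
    show "coeff ?p i = 0"
    proof (cases "i \<le> \<delta> \<and> i \<le> j")
      case True
      hence "j - i < m" using i by linarith
      thus ?thesis using True by (simp add: coeff_Wp zl)
    next
      case False
      thus ?thesis by (simp only: coeff_Wp if_False)
    qed
  qed
  show ?thesis unfolding eq by (rule nonroots_bound[OF a0 inj p0 low hi])
qed


lemma arith_B:
  fixes e \<delta> n :: nat
  assumes "e \<le> \<delta>" "\<delta> < n"
  shows "n * (\<delta> + 1) \<le> e * (2 * n + 1 - e) + (\<delta> + 1 - e) * (n - e)"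
proof -
  define a where "a = \<delta> - e"
  define b where "b = n - \<delta> - 1"
  have a: "\<delta> = e + a" using assms(1) a_def by simp
  have b: "n = e + a + 1 + b" using assms(2) a b_def by simp
  have 1: "2 * n + 1 - e = e + 2 * a + 2 * b + 3" using b by simp
  have 2: "\<delta> + 1 - e = a + 1" using a by simp
  have 3: "n - e = a + 1 + b" using b by simp
  have "e * (e + 2 * a + 2 * b + 3) + (a + 1) * (a + 1 + b) = (e + a + 1 + b) * (e + a + 1) + e * b + e"
    by (simp add: algebra_simps)
  thus ?thesis unfolding 1 2 3 using a b by simp
qed

lemma LB:
  fixes \<alpha> :: "'a::field"
  assumes n: "0 < n" and a0: "\<alpha> \<noteq> 0" and inj: "inj_on (\<lambda>i. \<alpha> ^ i) {..<n}"
    and dn: "\<delta> < n" and u0: "u \<noteq> 0"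
  shows "n * (\<delta> + 1) \<le> wt n (\<lambda>i. u * Grow \<alpha> n \<delta> i)"
proof -
  define d where "d = degree u"
  define m where "m = (LEAST k. coeff u k \<noteq> 0)"
  define B where "B = Bc \<alpha> n \<delta> u"
  have cd: "coeff u d \<noteq> 0" using u0 unfolding d_def by simp
  have cm: "coeff u m \<noteq> 0" unfolding m_def using cd by (metis (mono_tags, lifting) LeastI)
  have zl: "\<And>k. k < m \<Longrightarrow> coeff u k = 0" unfolding m_def using not_less_Least by blast
  have md: "m \<le> d" unfolding m_def using cd by (metis (mono_tags, lifting) Least_le)
  have Bb: "n - (min \<delta> (j - m) - (j - d)) \<le> B j"
    if "\<nu>0 \<le> \<delta>" "\<nu>0 \<le> j" "coeff u (j - \<nu>0) \<noteq> 0" for j \<nu>0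
    unfolding B_def d_def by (rule Bbound[OF a0 inj zl that])
  have wt: "wt n (\<lambda>i. u * Grow \<alpha> n \<delta> i) = (\<Sum>j\<le>d + \<delta>. B j)"
    unfolding d_def B_def by (rule wt_eq)
  show ?thesis
  proof (cases "m + \<delta> < d")
    case True
    let ?J1 = "(\<lambda>t. m + t) ` {..\<delta>}" and ?J2 = "(\<lambda>t. d + t) ` {..\<delta>}"
    have "n * (\<delta> + 1) = (\<Sum>t\<le>\<delta>. n)" by simp
    also have "\<dots> \<le> (\<Sum>t\<le>\<delta>. B (m + t) + B (d + t))"
    proof (rule sum_mono)
      fix t assume t: "t \<in> {..\<delta>}"
      have b1: "n - (min \<delta> (m + t - m) - (m + t - d)) \<le> B (m + t)"
        by (rule Bb[of t]) (use t cm in auto)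
      have b2: "n - (min \<delta> (d + t - m) - (d + t - d)) \<le> B (d + t)"
        by (rule Bb[of t]) (use t cd in auto)
      have e1: "min \<delta> (m + t - m) - (m + t - d) = t" using t True by auto
      have e2: "min \<delta> (d + t - m) - (d + t - d) = \<delta> - t" using t True by auto
      show "n \<le> B (m + t) + B (d + t)" using b1 b2 e1 e2 t dn by auto
    qed
    also have "\<dots> = (\<Sum>j\<in>?J1. B j) + (\<Sum>j\<in>?J2. B j)"
      by (simp add: sum.distrib sum.reindex inj_on_def)
    also have "\<dots> = (\<Sum>j\<in>?J1 \<union> ?J2. B j)"
      by (rule sum.union_disjoint[symmetric]) (use True in auto)
    also have "\<dots> \<le> (\<Sum>j\<le>d + \<delta>. B j)"
      by (rule sum_mono2) (use True in auto)
    finally show ?thesis using wt by simp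
  next
    case False
    define e where "e = d - m"
    have ed: "e \<le> \<delta>" and de: "d = m + e" using False md unfolding e_def by auto
    let ?K1 = "(\<lambda>s. m + s) ` {..<e}" and ?K3 = "(\<lambda>s. m + \<delta> + 1 + s) ` {..<e}"
      and ?K2 = "(\<lambda>t. m + t) ` {e..\<delta>}"
    have "n * (\<delta> + 1) \<le> e * (2 * n + 1 - e) + (\<delta> + 1 - e) * (n - e)"
      by (rule arith_B[OF ed dn])
    also have "\<dots> = (\<Sum>s<e. 2 * n + 1 - e) + (\<Sum>t\<in>{e..\<delta>}. n - e)" by simp
    also have "\<dots> \<le> (\<Sum>s<e. B (m + s) + B (m + \<delta> + 1 + s)) + (\<Sum>t\<in>{e..\<delta>}. B (m + t))"
    proof (rule add_mono)
      show "(\<Sum>s<e. 2 * n + 1 - e) \<le> (\<Sum>s<e. B (m + s) + B (m + \<delta> + 1 + s))"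
      proof (rule sum_mono)
        fix s assume s: "s \<in> {..<e}"
        have b1: "n - (min \<delta> (m + s - m) - (m + s - d)) \<le> B (m + s)"
          by (rule Bb[of s]) (use s cm ed in auto)
        have b2: "n - (min \<delta> (m + \<delta> + 1 + s - m) - (m + \<delta> + 1 + s - d)) \<le> B (m + \<delta> + 1 + s)"
          by (rule Bb[of "\<delta> + 1 + s - e"]) (use s cd ed de in auto)
        have e1: "min \<delta> (m + s - m) - (m + s - d) = s" using s ed de by auto
        have e2: "min \<delta> (m + \<delta> + 1 + s - m) - (m + \<delta> + 1 + s - d) = e - 1 - s" using s ed de by auto
        show "2 * n + 1 - e \<le> B (m + s) + B (m + \<delta> + 1 + s)" using b1 b2 e1 e2 s ed dn by auto
      qed
      show "(\<Sum>t\<in>{e..\<delta>}. n - e) \<le> (\<Sum>t\<in>{e..\<delta>}. B (m + t))"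
      proof (rule sum_mono)
        fix t assume t: "t \<in> {e..\<delta>}"
        have b1: "n - (min \<delta> (m + t - m) - (m + t - d)) \<le> B (m + t)"
          by (rule Bb[of t]) (use t cm in auto)
        have e1: "min \<delta> (m + t - m) - (m + t - d) = e" using t de by auto
        show "n - e \<le> B (m + t)" using b1 e1 by auto
      qed
    qed
    also have "\<dots> = ((\<Sum>j\<in>?K1. B j) + (\<Sum>j\<in>?K3. B j)) + (\<Sum>j\<in>?K2. B j)"
    proof -
      have i1: "inj_on (\<lambda>s. m + s) A" for A by (simp add: inj_on_def)
      have i3: "inj_on (\<lambda>s. m + \<delta> + 1 + s) A" for A by (simp add: inj_on_def)
      show ?thesis by (simp only: sum.reindex[OF i1] sum.reindex[OF i3] comp_def sum.distrib)
    qed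
    also have "\<dots> = (\<Sum>j\<in>(?K1 \<union> ?K3) \<union> ?K2. B j)"
      by (subst sum.union_disjoint, (use ed in auto)[3], subst sum.union_disjoint, (use ed in auto)[3]) simp
    also have "\<dots> \<le> (\<Sum>j\<le>d + \<delta>. B j)"
      by (rule sum_mono2) (use ed de in auto)
    finally show ?thesis using wt by simp
  qed
qed


lemma MDS_part:
  fixes \<alpha> :: "'a::field"
  assumes n: "0 < n" and a0: "\<alpha> \<noteq> 0" and inj: "inj_on (\<lambda>i. \<alpha> ^ i) {..<n}" and dn: "\<delta> < n"
  shows "is_MDS n \<delta> (image_row (Grow \<alpha> n \<delta>))"
  unfolding is_MDS_def free_distance_def
proof (rule Least_equality)
  let ?v = "\<lambda>i. 1 * Grow \<alpha> n \<delta> i"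
  have set: "{j. coeff (Grow \<alpha> n \<delta> i) j \<noteq> 0} = {..\<delta>}" if "i < n" for i
    using that a0 by (auto simp: coeff_Grow split: if_splits)
  have "(\<Sum>i<n. card {j. coeff (Grow \<alpha> n \<delta> i) j \<noteq> 0}) = (\<Sum>i<n. \<delta> + 1)"
    by (rule sum.cong) (simp_all add: set)
  hence wt1: "wt n ?v = n * (\<delta> + 1)"
    unfolding wt_def by simp
  have vin: "?v \<in> image_row (Grow \<alpha> n \<delta>)" unfolding image_row_def by blast
  have vnz: "?v \<noteq> (\<lambda>_. 0)"
  proof
    assume "?v = (\<lambda>_. 0)"
    hence "coeff (?v 0) 0 = 0" by simp
    thus False using n by (simp add: coeff_Grow)
  qed
  show "\<exists>v\<in>image_row (Grow \<alpha> n \<delta>). v \<noteq> (\<lambda>_. 0) \<and> n * (\<delta> + 1) = wt n v"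
    using vin vnz wt1 by metis
next
  fix y assume "\<exists>v\<in>image_row (Grow \<alpha> n \<delta>). v \<noteq> (\<lambda>_. 0) \<and> y = wt n v"
  then obtain u where nz: "(\<lambda>i. u * Grow \<alpha> n \<delta> i) \<noteq> (\<lambda>_. 0)" and y: "y = wt n (\<lambda>i. u * Grow \<alpha> n \<delta> i)"
    unfolding image_row_def by blast
  have "u \<noteq> 0" using nz by auto
  thus "n * (\<delta> + 1) \<le> y" unfolding y by (rule LB[OF n a0 inj dn])
qed

theorem proposition4p2:
  fixes \<alpha> :: "'a::{finite, field}" and n \<delta> :: nat
  assumes "0 < n"
    and "coprime n (card (UNIV :: 'a set))"
    and "mult_ord \<alpha> = n"
  shows "A_alg_automorphism n (sigma \<alpha> n)
         \<and> sigma \<alpha> n (A_x n) = smult \<alpha> (A_x n)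
         \<and> sigma_cyclic n (sigma \<alpha> n) (image_row (Grow \<alpha> n \<delta>))
         \<and> (\<delta> < n \<longrightarrow> conv_code_n1 n \<delta> (image_row (Grow \<alpha> n \<delta>))
                     \<and> is_MDS n \<delta> (image_row (Grow \<alpha> n \<delta>)))"
proof -
  note of = ord_facts[OF assms(1) assms(3)]
  have inj: "inj_on (\<lambda>i. \<alpha> ^ i) {..<n}" by (rule ord_inj[OF of(2) of(3)])
  have nz: "(of_nat n :: 'a) \<noteq> 0" by (rule of_nat_ord_nonzero[OF assms(1) of(1) of(3)])
  show ?thesis
    using sigma_automorphism[OF assms(1) of(1) of(2)] sigma_x[OF of(1)]
      sigma_cyclic_part[OF assms(1) of(1) of(2)]
      conv_code_part[OF assms(1) of(1) of(2) of(3) nz] MDS_part[OF assms(1) of(2) inj]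
    by blast
qed


end
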